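(* Let $n\ge2$, let $X\subset\mathbb{R}^n$ be finite with the Euclidean metric $d$, let $k\in\mathbb{N}$, $Y\subset X$ and $\epsilon>0$. If $p,q\in J(Y,\epsilon)$, then $\rho^{F(Y,\epsilon)}(p,q)=\rho^Y(p,q)$.
   Context: DBSCAN$^*$: for $Y\subset X$, $\mathcal{C}(Y,\epsilon)=\{p\in Y:|\{y\in Y:d(p,y)\le\epsilon\}|>k\}$ (core points), $\mathcal{N}(Y,\epsilon)=Y\setminus\mathcal{C}(Y,\epsilon)$ (noise points), and $\mathcal{D}^*(Y,\epsilon)$ is the set of vertex sets of the connected components of the graph with vertex set $\mathcal{C}(Y,\epsilon)$ and an edge between distinct $p,q$ whenever $d(p,q)\le\epsilon$. Reachability: for $Z\subset X$ and $p\in Z$, $\operatorname{core}^Z_k(p)$ is the distance from $p$ to a $k$-th nearest neighbour of $p$ in $Z$ (the $k$-th smallest value of $d(p,z)$, $z\in Z\setminus\{p\}$, counted with multiplicity), and $\rho^Z(p,q)=\max\{\operatorname{core}^Z_k(p),\operatorname{core}^Z_k(q),d(p,q)\}$ for $p\ne q$, $\rho^Z(p,p)=0$. Cubes: $\mathcal{Q}=\mathcal{Q}(\epsilon)$ is the collection of closed cubes $\{x\in\mathbb{R}^n: j_i\frac{\epsilon}{2\sqrt n}\le x_i\le (j_i+1)\frac{\epsilon}{2\sqrt n}\}$, $j\in\mathbb{Z}^n$; $S^m=\{x:\max_i|x_i-s_i|\le m\frac{\epsilon}{2\sqrt n}\text{ for some }s\in S\}$; $\mathcal{I}(B)=\{S\in\mathcal{Q}:S\cap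 B\neq\emptyset\}$. For $A\subset X$, $S\in\mathcal{I}(A)$ is an interior cube of $A$ if $S^1\cap X\subset A$ and every $T\in\mathcal{Q}$ with $T\subset S^1$ lies in $\mathcal{I}(A)$, otherwise a boundary cube; $\partial A$ is the union of boundary cubes. For $Z\subset\mathbb{R}^n$ and integer $N\ge0$, $Z^N=\bigcup_{S\in\mathcal{I}(Z)}S^N$ and $Z^N_C=Z^N\cap C$. $\mathfrak{n}$, $\mathfrak{m}$ are the smallest integers with $\mathfrak{n}\ge\sqrt n-1$, $\mathfrak{m}\ge2\sqrt n$, and $\mathfrak{N}=\mathfrak{n}+\mathfrak{m}$. Define $J(Y,\epsilon)=\bigcup_{C\in\mathcal{D}^*(Y,\epsilon)}(\partial C)^{\mathfrak{n}}_C\cup\mathcal{N}(Y,\epsilon)$ and $F(Y,\epsilon)=\bigcup_{C\in\mathcal{D}^*(Y,\epsilon)}(\partial C)^{\mathfrak{N}}_C\cup\mathcal{N}(Y,\epsilon)$, with cubes taken in $\mathcal{Q}(\epsilon)$. *)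

theory Defs
  imports "HOL-Analysis.Analysis" "HOL-Library.Multiset"
begin

definition core_points :: "nat \<Rightarrow> real \<Rightarrow> ('a::metric_space) set \<Rightarrow> 'a set" where
  "core_points k \<epsilon> Y = {p \<in> Y. card {y \<in> Y. dist p y \<le> \<epsilon>} > k}"

definition noise_points :: "nat \<Rightarrow> real \<Rightarrow> ('a::metric_space) set \<Rightarrow> 'a set" where
  "noise_points k \<epsilon> Y = Y - core_points k \<epsilon> Y"

definition eps_edges :: "nat \<Rightarrow> real \<Rightarrow> ('a::metric_space) set \<Rightarrow> ('a \<times> 'a) set" where
  "eps_edges k \<epsilon> Y = {(p, q). p \<in> core_points k \<epsilon> Y \<and> q \<in> core_points k \<epsilon> Y
       \<and> p \<noteq> q \<and> dist p q \<le> \<epsilon>}"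

definition dbscan_clusters :: "nat \<Rightarrow> real \<Rightarrow> ('a::metric_space) set \<Rightarrow> 'a set set" where
  "dbscan_clusters k \<epsilon> Y =
     {{q. (p, q) \<in> (eps_edges k \<epsilon> Y)\<^sup>*} | p. p \<in> core_points k \<epsilon> Y}"

text \<open>k-th smallest of the distances d(p,z), z in Z - {p}, counted with multiplicity.
  Convention: 0 if k = 0, and \<infinity> if fewer than k such points exist.\<close>
definition core_dist :: "nat \<Rightarrow> ('a::metric_space) set \<Rightarrow> 'a \<Rightarrow> ereal" where
  "core_dist k Z p =
     (let L = sorted_list_of_multiset (image_mset (dist p) (mset_set (Z - {p})))
      in if k = 0 then 0 else if k \<le> length L then ereal (L ! (k - 1)) else \<infinity>)"

definition reach :: "nat \<Rightarrow> ('a::metric_space) set \<Rightarrow> 'a \<Rightarrow> 'a \<Rightarrow> ereal" where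
  "reach k Z p q =
     (if p = q then 0 else max (core_dist k Z p) (max (core_dist k Z q) (ereal (dist p q))))"

definition cube_side :: "real \<Rightarrow> nat \<Rightarrow> real" where
  "cube_side \<epsilon> n = \<epsilon> / (2 * sqrt (real n))"

definition grid_cube :: "real \<Rightarrow> ('n::finite \<Rightarrow> int) \<Rightarrow> (real ^ 'n) set" where
  "grid_cube \<epsilon> j = {x. \<forall>i. of_int (j i) * cube_side \<epsilon> CARD('n) \<le> x $ i
                          \<and> x $ i \<le> (of_int (j i) + 1) * cube_side \<epsilon> CARD('n)}"

definition cubes :: "real \<Rightarrow> (real ^ 'n::finite) set set" where
  "cubes \<epsilon> = range (grid_cube \<epsilon>)"

definition thicken :: "real \<Rightarrow> nat \<Rightarrow> (real ^ 'n::finite) set \<Rightarrow> (real ^ 'n) set" where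
  "thicken \<epsilon> m S = {x. \<exists>s\<in>S. \<forall>i. \<bar>x $ i - s $ i\<bar> \<le> real m * cube_side \<epsilon> CARD('n)}"

definition meet_cubes :: "real \<Rightarrow> (real ^ 'n::finite) set \<Rightarrow> (real ^ 'n) set set" where
  "meet_cubes \<epsilon> B = {S \<in> cubes \<epsilon>. S \<inter> B \<noteq> {}}"

definition interior_cube ::
  "(real ^ 'n::finite) set \<Rightarrow> real \<Rightarrow> (real ^ 'n) set \<Rightarrow> (real ^ 'n) set \<Rightarrow> bool" where
  "interior_cube X \<epsilon> A S \<longleftrightarrow> S \<in> meet_cubes \<epsilon> A \<and> thicken \<epsilon> 1 S \<inter> X \<subseteq> A
     \<and> (\<forall>T \<in> cubes \<epsilon>. T \<subseteq> thicken \<epsilon> 1 S \<longrightarrow> T \<in> meet_cubes \<epsilon> A)"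

definition boundary_set ::
  "(real ^ 'n::finite) set \<Rightarrow> real \<Rightarrow> (real ^ 'n) set \<Rightarrow> (real ^ 'n) set" where
  "boundary_set X \<epsilon> A = \<Union>{S \<in> meet_cubes \<epsilon> A. \<not> interior_cube X \<epsilon> A S}"

definition nbhd :: "real \<Rightarrow> nat \<Rightarrow> (real ^ 'n::finite) set \<Rightarrow> (real ^ 'n) set" where
  "nbhd \<epsilon> N Z = \<Union>{thicken \<epsilon> N S | S. S \<in> meet_cubes \<epsilon> Z}"

definition frak_n :: "nat \<Rightarrow> nat" where
  "frak_n n = nat \<lceil>sqrt (real n) - 1\<rceil>"

definition frak_m :: "nat \<Rightarrow> nat" where
  "frak_m n = nat \<lceil>2 * sqrt (real n)\<rceil>"

definition frak_N :: "nat \<Rightarrow> nat" where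
  "frak_N n = frak_n n + frak_m n"

definition J_set :: "(real ^ 'n::finite) set \<Rightarrow> nat \<Rightarrow> real \<Rightarrow> (real ^ 'n) set \<Rightarrow> (real ^ 'n) set" where
  "J_set X k \<epsilon> Y =
     (\<Union>C \<in> dbscan_clusters k \<epsilon> Y. nbhd \<epsilon> (frak_n CARD('n)) (boundary_set X \<epsilon> C) \<inter> C)
     \<union> noise_points k \<epsilon> Y"

definition F_set :: "(real ^ 'n::finite) set \<Rightarrow> nat \<Rightarrow> real \<Rightarrow> (real ^ 'n) set \<Rightarrow> (real ^ 'n) set" where
  "F_set X k \<epsilon> Y =
     (\<Union>C \<in> dbscan_clusters k \<epsilon> Y. nbhd \<epsilon> (frak_N CARD('n)) (boundary_set X \<epsilon> C) \<inter> C)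
     \<union> noise_points k \<epsilon> Y"

end

theory Submission
  imports Defs
begin

lemma sorted_nth_le_iff_count:
  fixes L :: "real list"
  assumes "sorted L" "1 \<le> k" "k \<le> length L"
  shows "L ! (k - 1) \<le> r \<longleftrightarrow> k \<le> length (filter (\<lambda>x. x \<le> r) L)"
proof
  assume h: "L ! (k - 1) \<le> r"
  have "{0..<k} \<subseteq> {i. i < length L \<and> L ! i \<le> r}"
  proof
    fix i assume "i \<in> {0..<k}"
    then have "i \<le> k - 1" "k - 1 < length L" using assms by auto
    then have "L ! i \<le> L ! (k - 1)" using assms(1) by (simp add: sorted_nth_mono)
    then show "i \<in> {i. i < length L \<and> L ! i \<le> r}" using h \<open>i \<le> k - 1\<close> \<open>k - 1 < length L\<close> by auto
  qed
  then have "card {0..<k} \<le> card {i. i < length L \<and> L ! i \<le> r}"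
    by (intro card_mono) auto
  then show "k \<le> length (filter (\<lambda>x. x \<le> r) L)"
    by (simp add: length_filter_conv_card)
next
  assume h: "k \<le> length (filter (\<lambda>x. x \<le> r) L)"
  show "L ! (k - 1) \<le> r"
  proof (rule ccontr)
    assume "\<not> L ! (k - 1) \<le> r"
    have "{i. i < length L \<and> L ! i \<le> r} \<subseteq> {0..<k-1}"
    proof
      fix i assume i: "i \<in> {i. i < length L \<and> L ! i \<le> r}"
      show "i \<in> {0..<k-1}"
      proof (rule ccontr)
        assume "i \<notin> {0..<k-1}"
        then have "k - 1 \<le> i" by auto
        then have "L ! (k - 1) \<le> L ! i" using assms(1) i by (simp add: sorted_nth_mono)
        then show False using i \<open>\<not> L ! (k - 1) \<le> r\<close> by auto
      qed
    qed
    note sub = this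
    have "card {i. i < length L \<and> L ! i \<le> r} \<le> k - 1"
      using card_mono[OF _ sub] by auto
    then show False using h assms(2) by (simp add: length_filter_conv_card)
  qed
qed

lemma count_filter_list:
  fixes Z :: "'a::metric_space set"
  assumes "finite Z"
  shows "length (filter (\<lambda>x. x \<le> r) (sorted_list_of_multiset (image_mset (dist p) (mset_set (Z - {p})))))
     = card {z \<in> Z - {p}. dist p z \<le> r}"
proof -
  let ?M = "image_mset (dist p) (mset_set (Z - {p}))"
  have "length (filter (\<lambda>x. x \<le> r) (sorted_list_of_multiset ?M))
     = size (mset (filter (\<lambda>x. x \<le> r) (sorted_list_of_multiset ?M)))" by (rule size_mset[symmetric])
  also have "\<dots> = size (filter_mset (\<lambda>x. x \<le> r) ?M)"
    by (simp only: mset_filter mset_sorted_list_of_multiset)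
  also have "\<dots> = size (mset_set {z \<in> Z - {p}. dist p z \<le> r})"
    using assms by (simp add: filter_mset_image_mset filter_mset_mset_set)
  also have "\<dots> = card {z \<in> Z - {p}. dist p z \<le> r}" by simp
  finally show ?thesis .
qed

lemma core_dist_le_iff:
  fixes Z :: "'a::metric_space set"
  assumes "finite Z" "1 \<le> k"
  shows "core_dist k Z p \<le> ereal r \<longleftrightarrow> k \<le> card {z \<in> Z - {p}. dist p z \<le> r}"
proof -
  let ?L = "sorted_list_of_multiset (image_mset (dist p) (mset_set (Z - {p})))"
  have len: "length ?L = card (Z - {p})"
    by (metis mset_sorted_list_of_multiset size_image_mset size_mset size_mset_set)
  have cnt: "length (filter (\<lambda>x. x \<le> r) ?L) = card {z \<in> Z - {p}. dist p z \<le> r}"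
    using count_filter_list[OF assms(1)] .
  show ?thesis
  proof (cases "k \<le> length ?L")
    case True
    then have "core_dist k Z p = ereal (?L ! (k - 1))" using assms by (simp add: core_dist_def Let_def)
    then show ?thesis
      using sorted_nth_le_iff_count[of ?L k r] True assms cnt by simp
  next
    case False
    then have "core_dist k Z p = \<infinity>" using assms by (simp add: core_dist_def Let_def)
    moreover have "card {z \<in> Z - {p}. dist p z \<le> r} \<le> card (Z - {p})"
      using assms by (intro card_mono) auto
    ultimately show ?thesis using False len by simp
  qed
qed

lemma core_dist_not_minf: "core_dist k Z p \<noteq> -\<infinity>"
  by (simp add: core_dist_def Let_def)

lemma core_dist_less_card:
  fixes Y :: "'a::metric_space set"
  assumes "finite Y" "1 \<le> k" "core_dist k Y p = ereal r0"
  shows "card {y \<in> Y - {p}. dist p y < r0} < k"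
proof (rule ccontr)
  let ?A = "{y \<in> Y - {p}. dist p y < r0}"
  assume "\<not> card ?A < k"
  then have ck: "k \<le> card ?A" by simp
  then have "card ?A \<noteq> 0" using assms(2) by linarith
  then have ne: "?A \<noteq> {}" by (metis card.empty)
  have fin: "finite ?A" using assms(1) by simp
  define r' where "r' = Max (dist p ` ?A)"
  have "r' \<in> dist p ` ?A" unfolding r'_def using fin ne by (intro Max_in) auto
  then have "r' < r0" by auto
  have "?A \<subseteq> {z \<in> Y - {p}. dist p z \<le> r'}"
    unfolding r'_def using fin by auto
  then have "card ?A \<le> card {z \<in> Y - {p}. dist p z \<le> r'}"
    using assms(1) by (intro card_mono) auto
  then have "core_dist k Y p \<le> ereal r'"
    using core_dist_le_iff[OF assms(1,2)] ck by simp
  then show False using assms(3) \<open>r' < r0\<close> by simp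
qed

lemma core_dist_eqI:
  fixes Y F :: "'a::metric_space set"
  assumes "finite Y" "F \<subseteq> Y"
    and key: "\<And>r0 y. core_dist k Y p = ereal r0 \<Longrightarrow> y \<in> Y - {p} \<Longrightarrow> dist p y \<le> r0 \<Longrightarrow> y \<in> F"
  shows "core_dist k F p = core_dist k Y p"
proof (cases "k = 0")
  case True then show ?thesis by (simp add: core_dist_def)
next
  case False
  then have k1: "1 \<le> k" by simp
  have finF: "finite F" using assms finite_subset by blast
  have iff: "core_dist k F p \<le> ereal r \<longleftrightarrow> core_dist k Y p \<le> ereal r" for r
  proof
    assume "core_dist k F p \<le> ereal r"
    then have "k \<le> card {z \<in> F - {p}. dist p z \<le> r}" using core_dist_le_iff[OF finF k1] by simp
    also have "\<dots> \<le> card {z \<in> Y - {p}. dist p z \<le> r}"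
      using assms by (intro card_mono) auto
    finally show "core_dist k Y p \<le> ereal r" using core_dist_le_iff[OF assms(1) k1] by simp
  next
    assume h: "core_dist k Y p \<le> ereal r"
    then obtain r0 where r0: "core_dist k Y p = ereal r0"
      using core_dist_not_minf by (cases "core_dist k Y p") auto
    then have "r0 \<le> r" using h by simp
    have "core_dist k Y p \<le> ereal r0" using r0 by simp
    then have "k \<le> card {z \<in> Y - {p}. dist p z \<le> r0}"
      using core_dist_le_iff[OF assms(1) k1] by blast
    also have "\<dots> \<le> card {z \<in> F - {p}. dist p z \<le> r}"
      using finF key[OF r0] \<open>r0 \<le> r\<close> by (intro card_mono) auto
    finally show "core_dist k F p \<le> ereal r" using core_dist_le_iff[OF finF k1] by simp
  qed
  show ?thesis
  proof (rule ccontr)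
    assume ne: "core_dist k F p \<noteq> core_dist k Y p"
    show False
    proof (cases "core_dist k F p < core_dist k Y p")
      case True
      then obtain x where "core_dist k F p = ereal x"
        using core_dist_not_minf by (cases "core_dist k F p") auto
      then show False using iff[of x] True by auto
    next
      case False
      then have "core_dist k Y p < core_dist k F p" using ne by auto
      then obtain x where "core_dist k Y p = ereal x"
        using core_dist_not_minf by (cases "core_dist k Y p") auto
      then show False using iff[of x] \<open>core_dist k Y p < core_dist k F p\<close> by auto
    qed
  qed
qed


lemma clamp_bound:
  fixes s x :: real and j j' :: int
  assumes "s > 0" "of_int j * s \<le> x" "x \<le> (of_int j + 1) * s" "\<bar>j' - j\<bar> \<le> M"
  shows "\<bar>x - max (of_int j' * s) (min ((of_int j' + 1) * s) x)\<bar> \<le> of_int M * s"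
proof -
  have "of_int \<bar>j' - j\<bar> * s \<le> of_int M * s" using assms by (intro mult_right_mono) auto
  then have h: "\<bar>of_int j' - of_int j\<bar> * s \<le> of_int M * s" by simp
  show ?thesis
  proof (cases "x < of_int j' * s")
    case True
    then have "of_int j * s < of_int j' * s" using assms by linarith
    then have "j < j'" using assms(1) by (simp add: mult_less_cancel_right)
    then show ?thesis using True h assms by (auto simp: algebra_simps abs_if split: if_splits)
  next
    case False
    show ?thesis
    proof (cases "x > (of_int j' + 1) * s")
      case True
      then have "(of_int j' + 1) * s < (of_int j + 1) * s" using assms by linarith
      then have "j' < j" using assms(1) by (simp add: mult_less_cancel_right)
      then show ?thesis using True h assms by (auto simp: algebra_simps abs_if split: if_splits)
    next
      case F2: False
      have "0 \<le> of_int M * s" using assms(1,4) by simp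
      then show ?thesis using False F2 by (auto simp: max_def min_def)
    qed
  qed
qed

lemma cube_side_pos: "\<epsilon> > 0 \<Longrightarrow> cube_side \<epsilon> CARD('n::finite) > 0"
  unfolding cube_side_def by simp

lemma in_thicken_cube:
  fixes x :: "real ^ 'n::finite"
  assumes "\<epsilon> > 0" "x \<in> grid_cube \<epsilon> j" "\<forall>i. \<bar>j' i - j i\<bar> \<le> int M"
  shows "x \<in> thicken \<epsilon> M (grid_cube \<epsilon> j')"
proof -
  let ?s = "cube_side \<epsilon> CARD('n)"
  have s: "?s > 0" using cube_side_pos assms(1) by blast
  define c where "c = (\<chi> i. max (of_int (j' i) * ?s) (min ((of_int (j' i) + 1) * ?s) (x $ i)))"
  have "c \<in> grid_cube \<epsilon> j'"
    unfolding grid_cube_def c_def using s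
    by (auto simp: algebra_simps max_def min_def)
  moreover have "\<bar>x $ i - c $ i\<bar> \<le> real M * ?s" for i
  proof -
    have "of_int (j i) * ?s \<le> x $ i" "x $ i \<le> (of_int (j i) + 1) * ?s"
      using assms(2) unfolding grid_cube_def by auto
    from clamp_bound[OF s this assms(3)[rule_format, of i]]
    show ?thesis unfolding c_def by simp
  qed
  ultimately show ?thesis unfolding thicken_def by blast
qed

lemma in_own_cube:
  fixes y :: "real ^ 'n::finite"
  assumes "\<epsilon> > 0"
  shows "y \<in> grid_cube \<epsilon> (\<lambda>i. \<lfloor>y $ i / cube_side \<epsilon> CARD('n)\<rfloor>)"
proof -
  let ?s = "cube_side \<epsilon> CARD('n)"
  have s: "?s > 0" using cube_side_pos assms(1) by blast
  have "of_int \<lfloor>y $ i / ?s\<rfloor> * ?s \<le> y $ i \<and> y $ i \<le> (of_int \<lfloor>y $ i / ?s\<rfloor> + 1) * ?s" for i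
  proof -
    have "of_int \<lfloor>y $ i / ?s\<rfloor> \<le> y $ i / ?s" "y $ i / ?s \<le> of_int \<lfloor>y $ i / ?s\<rfloor> + 1"
      by linarith+
    then have "of_int \<lfloor>y $ i / ?s\<rfloor> * ?s \<le> (y $ i / ?s) * ?s" "(y $ i / ?s) * ?s \<le> (of_int \<lfloor>y $ i / ?s\<rfloor> + 1) * ?s"
      using s by (intro mult_right_mono; simp)+
    then show ?thesis using s by simp
  qed
  then show ?thesis unfolding grid_cube_def by auto
qed

lemma final_ineq:
  fixes q s t R :: real
  assumes "q > 1" "s > 0" "t \<ge> 2 * q * s + (q - 1) * s" "R > t + s"
  shows "(R - t) ^ 2 + (q ^ 2 - 1) * s ^ 2 < (R - 2 * q * s) ^ 2"
proof -
  define d where "d = t - 2 * q * s"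
  have d1: "d \<ge> (q - 1) * s" using assms unfolding d_def by simp
  have dpos: "d > 0" using d1 assms by (smt (verit) mult_pos_pos)
  have R1: "R - 2 * q * s > d + s" using assms unfolding d_def by simp
  have e: "(R - t) ^ 2 = (R - 2 * q * s) ^ 2 - 2 * d * (R - 2 * q * s) + d ^ 2" unfolding d_def by (simp add: power2_eq_square algebra_simps)
  have "2 * d * (R - 2 * q * s) > 2 * d * (d+s)" using R1 dpos by simp
  moreover have "d * (d + 2 * s) \<ge> ((q-1) * s) * ((q-1) * s + 2 * s)"
    using d1 dpos assms by (intro mult_mono add_mono) auto
  moreover have "((q-1) * s) * ((q-1) * s + 2 * s) = (q ^ 2-1) * s ^ 2" by (simp add: power2_eq_square algebra_simps)
  ultimately show ?thesis using e by (simp add: power2_eq_square algebra_simps)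
qed


lemma floor_bounds:
  fixes s y :: real assumes "s > 0"
  shows "of_int \<lfloor>y / s\<rfloor> * s \<le> y" "y < of_int \<lfloor>y / s\<rfloor> * s + s"
proof -
  have "of_int \<lfloor>y / s\<rfloor> \<le> y / s" "y / s < of_int \<lfloor>y / s\<rfloor> + 1" by linarith+
  then have "of_int \<lfloor>y / s\<rfloor> * s \<le> (y / s) * s" "(y / s) * s < (of_int \<lfloor>y / s\<rfloor> + 1) * s"
    using assms by (intro mult_right_mono mult_strict_right_mono; simp)+
  then show "of_int \<lfloor>y / s\<rfloor> * s \<le> y" "y < of_int \<lfloor>y / s\<rfloor> * s + s" using assms by (simp_all add: algebra_simps)
qed

lemma int_mult_le:
  fixes s :: real and a b :: int assumes "s > 0" "a \<le> b"
  shows "of_int a * s \<le> of_int b * s"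
  using assms by (intro mult_right_mono) auto

lemma coord_bound:
  fixes s y p c :: real and J P jt :: int and M :: nat
  assumes s: "s > 0" and J: "J = \<lfloor>y / s\<rfloor>" and P: "P = \<lfloor>p / s\<rfloor>"
    and jt: "jt = J + max (- (int M + 1)) (min (int M + 1) (P - J))"
    and c1: "of_int jt * s \<le> c" and c2: "c \<le> of_int jt * s + s"
  shows "\<bar>p - c\<bar> \<le> max (\<bar>p - y\<bar> - real M * s) s"
    and "\<bar>P - J\<bar> > int M + 1 \<Longrightarrow> \<bar>p - c\<bar> \<le> \<bar>p - y\<bar> - real M * s \<and> \<bar>p - y\<bar> > (real M + 1) * s"
proof -
  have y1: "of_int J * s \<le> y" and y2: "y < of_int J * s + s" using floor_bounds[OF s, of y] J by auto
  have p1: "of_int P * s \<le> p" and p2: "p < of_int P * s + s" using floor_bounds[OF s, of p] P by auto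
  have case_hi: "\<bar>p - c\<bar> \<le> \<bar>p - y\<bar> - real M * s \<and> \<bar>p - y\<bar> > (real M + 1) * s" if h: "P - J > int M + 1"
  proof -
    have "jt = J + int M + 1" using jt h by simp
    then have e: "of_int jt * s = of_int J * s + real M * s + s" by (simp add: algebra_simps)
    have "of_int (J + int M + 2) * s \<le> of_int P * s" using h s by (intro int_mult_le) auto
    then have "of_int J * s + real M * s + 2 * s \<le> of_int P * s" by (simp add: algebra_simps)
    then show ?thesis using e c1 c2 y1 y2 p1 p2 s by (auto simp: algebra_simps abs_if)
  qed
  have case_lo: "\<bar>p - c\<bar> \<le> \<bar>p - y\<bar> - real M * s \<and> \<bar>p - y\<bar> > (real M + 1) * s" if h: "P - J < - (int M + 1)"
  proof -
    have jj: "jt = J - int M - 1" using jt h by simp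
    have e: "of_int jt * s = of_int J * s - real M * s - s" by (subst jj) (simp add: algebra_simps)
    have "of_int (P + 1) * s \<le> of_int (J - int M - 1) * s" using h s by (intro int_mult_le) auto
    then have "of_int P * s + s \<le> of_int J * s - real M * s - s" by (simp add: algebra_simps)
    then show ?thesis using e c1 c2 y1 y2 p1 p2 s by (auto simp: algebra_simps abs_if)
  qed
  have case_mid: "\<bar>p - c\<bar> \<le> s" if h: "\<bar>P - J\<bar> \<le> int M + 1"
  proof -
    have "jt = P" using jt h by (simp add: abs_if split: if_splits)
    then show ?thesis using c1 c2 p1 p2 by (auto simp: abs_if)
  qed
  show "\<bar>p - c\<bar> \<le> max (\<bar>p - y\<bar> - real M * s) s"
  proof (cases "\<bar>P - J\<bar> \<le> int M + 1")
    case True then show ?thesis using case_mid by simp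
  next
    case False
    then have "P - J > int M + 1 \<or> P - J < - (int M + 1)" by auto
    then show ?thesis using case_hi case_lo by force
  qed
  show "\<bar>P - J\<bar> > int M + 1 \<Longrightarrow> \<bar>p - c\<bar> \<le> \<bar>p - y\<bar> - real M * s \<and> \<bar>p - y\<bar> > (real M + 1) * s"
  proof -
    assume "\<bar>P - J\<bar> > int M + 1"
    then have "P - J > int M + 1 \<or> P - J < - (int M + 1)" by auto
    then show ?thesis using case_hi case_lo by blast
  qed
qed

lemma sum_sq_bound:
  fixes a b :: "'n::finite \<Rightarrow> real" and t s R q :: real
  assumes s: "s > 0" and a0: "\<And>i. 0 \<le> a i" and b0: "\<And>i. 0 \<le> b i"
    and bb: "\<And>i. b i \<le> max (a i - t) s" and bi0: "b i0 \<le> a i0 - t"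
    and ai0: "a i0 > t + s" and t0: "t \<ge> 0"
    and R: "R = sqrt (\<Sum>i\<in>UNIV. (a i)^2)"
  shows "(\<Sum>i\<in>UNIV. (b i)^2) \<le> (R - t)^2 + (real CARD('n) - 1) * s^2"
proof -
  have "(a i0)^2 \<le> (\<Sum>i\<in>UNIV. (a i)^2)"
    by (rule member_le_sum) auto
  then have "a i0 \<le> R" unfolding R using a0 by (metis real_le_rsqrt)
  then have Rt: "R > t" using ai0 s by linarith
  then have Rpos: "R > 0" using t0 by linarith
  have step1: "(b i)^2 \<le> (max (a i - t) 0)^2 + (if i = i0 then 0 else s^2)" for i
  proof (cases "i = i0")
    case True
    then have "b i \<le> a i - t" using bi0 by simp
    then have "(b i)^2 \<le> (a i - t)^2" using b0 by (intro power_mono) auto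
    then show ?thesis using True ai0 s t0 by (simp add: max_def)
  next
    case False
    have "(b i)^2 \<le> (max (a i - t) 0)^2 + s^2"
    proof (cases "a i - t \<le> s")
      case True
      then have "b i \<le> s" using bb[of i] by simp
      then have "(b i)^2 \<le> s^2" using b0 by (intro power_mono) auto
      then show ?thesis by (smt (verit) zero_le_power2)
    next
      case F: False
      then have "b i \<le> a i - t" using bb[of i] by simp
      then have "(b i)^2 \<le> (a i - t)^2" using b0 by (intro power_mono) auto
      moreover have "max (a i - t) 0 = a i - t" using F s by simp
      ultimately show ?thesis by (smt (verit) zero_le_power2)
    qed
    then show ?thesis using False by simp
  qed
  have step2: "(max (a i - t) 0)^2 \<le> (a i)^2 * (1 - t / R)^2" for i
  proof -
    have "(a i)^2 \<le> (\<Sum>i\<in>UNIV. (a i)^2)"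
      by (rule member_le_sum) auto
    then have "a i \<le> R" unfolding R using a0 by (metis real_le_rsqrt)
    have "max (a i - t) 0 \<le> a i * (1 - t / R)"
    proof (cases "a i \<le> t")
      case True
      then show ?thesis using a0[of i] Rt Rpos by (simp add: max_def)
    next
      case False
      have "a i * (t / R) \<le> R * (t / R)" using \<open>a i \<le> R\<close> Rpos t0
        by (intro mult_right_mono) auto
      then have "a i * (t / R) \<le> t" using Rpos by simp
      then show ?thesis using False by (simp add: algebra_simps max_def)
    qed
    then have "(max (a i - t) 0)^2 \<le> (a i * (1 - t / R))^2" by (intro power_mono) auto
    then show ?thesis by (simp add: power_mult_distrib)
  qed
  have "(\<Sum>i\<in>UNIV. (b i)^2) \<le> (\<Sum>i\<in>UNIV. (a i)^2 * (1 - t / R)^2 + (if i = i0 then 0 else s^2))"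
    using step1 step2 by (intro sum_mono) (smt (verit))
  also have "\<dots> = (\<Sum>i\<in>UNIV. (a i)^2) * (1 - t / R)^2 + (\<Sum>i\<in>UNIV. (if i = i0 then 0 else s^2))"
    by (simp add: sum.distrib sum_distrib_right)
  also have "(\<Sum>i\<in>UNIV. (if i = i0 then 0 else s^2)) = (real CARD('n) - 1) * s^2"
  proof -
    have "(\<Sum>i\<in>UNIV. (if i = i0 then 0 else s^2)) = (\<Sum>i\<in>UNIV - {i0}. s^2)"
      by (simp add: sum.If_cases Compl_eq_Diff_UNIV)
    also have "\<dots> = real (CARD('n) - 1) * s^2" by simp
    also have "real (CARD('n) - 1) = real CARD('n) - 1"
      by (simp add: of_nat_diff Suc_leI)
    finally show ?thesis .
  qed
  also have "(\<Sum>i\<in>UNIV. (a i)^2) = R^2" unfolding R using a0 by (simp add: sum_nonneg)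
  also have "R^2 * (1 - t / R)^2 = (R - t)^2" using Rpos by (simp add: power2_eq_square field_simps)
  finally show ?thesis .
qed

lemma real_nat_ceiling_ge: "x \<le> real (nat \<lceil>x\<rceil>)"
proof (cases "0 \<le> \<lceil>x\<rceil>")
  case True
  then have "real (nat \<lceil>x\<rceil>) = of_int \<lceil>x\<rceil>" by simp
  then show ?thesis using le_of_int_ceiling[of x] by linarith
next
  case False
  then have "x < 0" by linarith
  then show ?thesis by simp
qed

lemma frak_N_bound: "real (frak_N n) \<ge> 3 * sqrt (real n) - 1"
proof -
  have "real (frak_n n) \<ge> sqrt (real n) - 1" unfolding frak_n_def by (rule real_nat_ceiling_ge)
  moreover have "real (frak_m n) \<ge> 2 * sqrt (real n)" unfolding frak_m_def by (rule real_nat_ceiling_ge)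
  ultimately show ?thesis unfolding frak_N_def by simp
qed

lemma clusters_core: "C \<in> dbscan_clusters k \<epsilon> Y \<Longrightarrow> C \<subseteq> core_points k \<epsilon> Y"
proof
  fix x assume "C \<in> dbscan_clusters k \<epsilon> Y" "x \<in> C"
  then obtain p0 where p0: "p0 \<in> core_points k \<epsilon> Y" "(p0, x) \<in> (eps_edges k \<epsilon> Y)\<^sup>*"
    unfolding dbscan_clusters_def by auto
  from p0(2) show "x \<in> core_points k \<epsilon> Y"
  proof (induction rule: rtrancl_induct)
    case base then show ?case using p0(1) .
  next
    case (step a b) then show ?case unfolding eps_edges_def by auto
  qed
qed

lemma own_cluster:
  assumes "y \<in> core_points k \<epsilon> Y"
  shows "{q. (y, q) \<in> (eps_edges k \<epsilon> Y)\<^sup>*} \<in> dbscan_clusters k \<epsilon> Y"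
    "y \<in> {q. (y, q) \<in> (eps_edges k \<epsilon> Y)\<^sup>*}"
  using assms unfolding dbscan_clusters_def by auto

lemma cluster_edge:
  assumes "C \<in> dbscan_clusters k \<epsilon> Y" "p \<in> C" "y \<in> core_points k \<epsilon> Y" "p \<noteq> y" "dist p y \<le> \<epsilon>"
  shows "y \<in> C"
proof -
  obtain p0 where p0: "C = {q. (p0, q) \<in> (eps_edges k \<epsilon> Y)\<^sup>*}"
    using assms(1) unfolding dbscan_clusters_def by auto
  have "p \<in> core_points k \<epsilon> Y" using clusters_core[OF assms(1)] assms(2) by auto
  then have "(p, y) \<in> eps_edges k \<epsilon> Y" using assms unfolding eps_edges_def by auto
  then show ?thesis using assms(2) p0 by (auto intro: rtrancl_into_rtrancl)
qed

lemma dist_vec_sq: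
  fixes p y :: "real ^ 'n::finite"
  shows "dist p y = sqrt (\<Sum>i\<in>UNIV. (\<bar>p $ i - y $ i\<bar>)^2)"
  unfolding dist_vec_def L2_set_def dist_real_def by (rule refl)

lemma noise_case:
  fixes X Y C :: "(real ^ 'n::finite) set" and p y :: "real ^ 'n"
  assumes n2: "CARD('n) \<ge> 2" and YX: "Y \<subseteq> X" and e: "\<epsilon> > 0" and pY: "p \<in> Y" and pC: "p \<notin> C"
    and Ccore: "C \<subseteq> core_points k \<epsilon> Y" and yC: "y \<in> C" and finY: "finite Y"
    and cnt: "card {y' \<in> Y - {p}. dist p y' < r} < k" and dr: "dist p y \<le> r"
  shows "y \<in> nbhd \<epsilon> (frak_N CARD('n)) (boundary_set X \<epsilon> C)"
proof (rule ccontr)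
  assume nin: "y \<notin> nbhd \<epsilon> (frak_N CARD('n)) (boundary_set X \<epsilon> C)"
  define s where "s = cube_side \<epsilon> CARD('n)"
  define N where "N = frak_N CARD('n)"
  have s0: "s > 0" unfolding s_def using cube_side_pos[OF e] .
  define j where "j = (\<lambda>i. \<lfloor>y $ i / s\<rfloor>)"
  have yj: "y \<in> grid_cube \<epsilon> j" using in_own_cube[OF e] unfolding j_def s_def .
  have H: "interior_cube X \<epsilon> C (grid_cube \<epsilon> j')"
    if hj: "\<forall>i. \<bar>j' i - j i\<bar> \<le> int N" and hm: "grid_cube \<epsilon> j' \<inter> C \<noteq> {}" for j'
  proof (rule ccontr)
    assume ni: "\<not> interior_cube X \<epsilon> C (grid_cube \<epsilon> j')"
    let ?S = "grid_cube \<epsilon> j'"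
    have Sm: "?S \<in> meet_cubes \<epsilon> C" unfolding meet_cubes_def cubes_def using hm by auto
    have "?S \<subseteq> boundary_set X \<epsilon> C" unfolding boundary_set_def using Sm ni by auto
    then have "?S \<in> meet_cubes \<epsilon> (boundary_set X \<epsilon> C)" unfolding meet_cubes_def cubes_def using hm by auto
    moreover have "y \<in> thicken \<epsilon> N ?S" using in_thicken_cube[OF e yj hj] .
    ultimately have "y \<in> nbhd \<epsilon> N (boundary_set X \<epsilon> C)" unfolding nbhd_def by blast
    then show False using nin N_def by simp
  qed
  have Meet: "\<forall>j'. (\<forall>i. \<bar>j' i - j i\<bar> \<le> int d) \<longrightarrow> grid_cube \<epsilon> j' \<inter> C \<noteq> {}" if "d \<le> N + 1" for d
    using that
  proof (induction d)
    case 0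
    show ?case
    proof (intro allI impI)
      fix j' assume "\<forall>i. \<bar>j' i - j i\<bar> \<le> int 0"
      then have "j' = j" by (auto simp: fun_eq_iff)
      then show "grid_cube \<epsilon> j' \<inter> C \<noteq> {}" using yj yC by auto
    qed
  next
    case (Suc d)
    show ?case
    proof (intro allI impI)
      fix j'' assume h: "\<forall>i. \<bar>j'' i - j i\<bar> \<le> int (Suc d)"
      define j' where "j' = (\<lambda>i. j i + max (- int d) (min (int d) (j'' i - j i)))"
      have h1: "\<forall>i. \<bar>j' i - j i\<bar> \<le> int d" unfolding j'_def by auto
      have h2: "\<forall>i. \<bar>j'' i - j' i\<bar> \<le> int 1"
      proof
        fix i show "\<bar>j'' i - j' i\<bar> \<le> int 1" using h[rule_format, of i] unfolding j'_def by (auto simp: abs_if max_def min_def)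
      qed
      have m: "grid_cube \<epsilon> j' \<inter> C \<noteq> {}" using Suc.IH Suc.prems h1 by auto
      have dN: "int d \<le> int N" using Suc.prems by simp
      have "\<forall>i. \<bar>j' i - j i\<bar> \<le> int N" using h1 dN order_trans by blast
      then have int: "interior_cube X \<epsilon> C (grid_cube \<epsilon> j')" using H m by blast
      have h2': "\<forall>i. \<bar>j' i - j'' i\<bar> \<le> int 1" using h2 by (simp add: abs_minus_commute)
      have "grid_cube \<epsilon> j'' \<subseteq> thicken \<epsilon> 1 (grid_cube \<epsilon> j')" using in_thicken_cube[OF e _ h2'] by blast
      moreover have "grid_cube \<epsilon> j'' \<in> cubes \<epsilon>" unfolding cubes_def by simp
      ultimately have "grid_cube \<epsilon> j'' \<in> meet_cubes \<epsilon> C" using int unfolding interior_cube_def by blast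
      then show "grid_cube \<epsilon> j'' \<inter> C \<noteq> {}" unfolding meet_cubes_def by blast
    qed
  qed
  define P where "P = (\<lambda>i. \<lfloor>p $ i / s\<rfloor>)"
  have pP: "p \<in> grid_cube \<epsilon> P" using in_own_cube[OF e] unfolding P_def s_def .
  have far: "\<exists>i0. \<bar>P i0 - j i0\<bar> > int N + 1"
  proof (rule ccontr)
    assume "\<not> (\<exists>i0. \<bar>P i0 - j i0\<bar> > int N + 1)"
    then have hP: "\<forall>i. \<bar>P i - j i\<bar> \<le> int N + 1" by (meson not_less)
    define j' where "j' = (\<lambda>i. j i + max (- int N) (min (int N) (P i - j i)))"
    have h1: "\<forall>i. \<bar>j' i - j i\<bar> \<le> int N" unfolding j'_def by auto
    have h2: "\<forall>i. \<bar>P i - j' i\<bar> \<le> int 1"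
    proof
      fix i show "\<bar>P i - j' i\<bar> \<le> int 1" using hP[rule_format, of i] unfolding j'_def by (auto simp: abs_if max_def min_def)
    qed
    have "\<forall>i. \<bar>j' i - j i\<bar> \<le> int (N + 1)"
    proof
      fix i have "\<bar>j' i - j i\<bar> \<le> int N" using h1 by blast
      then show "\<bar>j' i - j i\<bar> \<le> int (N + 1)" by simp
    qed
    then have m: "grid_cube \<epsilon> j' \<inter> C \<noteq> {}" using Meet[of "N+1"] by blast
    have int: "interior_cube X \<epsilon> C (grid_cube \<epsilon> j')" using H h1 m by blast
    have h2': "\<forall>i. \<bar>j' i - P i\<bar> \<le> int 1" using h2 by (simp add: abs_minus_commute)
    have "p \<in> thicken \<epsilon> 1 (grid_cube \<epsilon> j')" using in_thicken_cube[OF e pP h2'] .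
    then have "p \<in> C" using int pY YX unfolding interior_cube_def by blast
    then show False using pC by simp
  qed
  then obtain i0 where i0: "\<bar>P i0 - j i0\<bar> > int N + 1" by blast
  define jt where "jt = (\<lambda>i. j i + max (- (int N + 1)) (min (int N + 1) (P i - j i)))"
  have "\<forall>i. \<bar>jt i - j i\<bar> \<le> int (N + 1)" unfolding jt_def by auto
  then have "grid_cube \<epsilon> jt \<inter> C \<noteq> {}" using Meet[of "N+1"] by blast
  then obtain c where cjt: "c \<in> grid_cube \<epsilon> jt" and cC: "c \<in> C" by auto
  have cb: "\<bar>p $ i - c $ i\<bar> \<le> max (\<bar>p $ i - y $ i\<bar> - real N * s) s" 
    and cb0: "\<bar>P i - j i\<bar> > int N + 1 \<Longrightarrow> \<bar>p $ i - c $ i\<bar> \<le> \<bar>p $ i - y $ i\<bar> - real N * s \<and> \<bar>p $ i - y $ i\<bar> > (real N + 1) * s" for i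
  proof -
    have "of_int (jt i) * cube_side \<epsilon> CARD('n) \<le> c $ i \<and> c $ i \<le> (of_int (jt i) + 1) * cube_side \<epsilon> CARD('n)"
      using cjt unfolding grid_cube_def by blast
    then have c1: "of_int (jt i) * s \<le> c $ i" and c2: "c $ i \<le> of_int (jt i) * s + s"
      unfolding s_def[symmetric] by (simp_all add: distrib_right)
    have Jeq: "j i = \<lfloor>y $ i / s\<rfloor>" unfolding j_def by (rule refl)
    have Peq: "P i = \<lfloor>p $ i / s\<rfloor>" unfolding P_def by (rule refl)
    have jteq: "jt i = j i + max (- (int N + 1)) (min (int N + 1) (P i - j i))" unfolding jt_def by (rule refl)
    note cbd = coord_bound[where s=s and y="y $ i" and p="p $ i" and c="c $ i" and J="j i" and P="P i" and jt="jt i" and M=N, OF s0 Jeq Peq jteq c1 c2]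
    show "\<bar>p $ i - c $ i\<bar> \<le> max (\<bar>p $ i - y $ i\<bar> - real N * s) s"
      by (rule cbd(1))
    show "\<bar>P i - j i\<bar> > int N + 1 \<Longrightarrow> \<bar>p $ i - c $ i\<bar> \<le> \<bar>p $ i - y $ i\<bar> - real N * s \<and> \<bar>p $ i - y $ i\<bar> > (real N + 1) * s"
      by (rule cbd(2))
  qed
  define R where "R = dist p y"
  have Rdef: "R = sqrt (\<Sum>i\<in>UNIV. (\<bar>p $ i - y $ i\<bar>)^2)" unfolding R_def by (rule dist_vec_sq)
  have t0: "real N * s \<ge> 0" using s0 by simp
  have ai0: "\<bar>p $ i0 - y $ i0\<bar> > real N * s + s" using cb0[OF i0] by (simp add: algebra_simps)
  have sq: "(\<Sum>i\<in>UNIV. (\<bar>p $ i - c $ i\<bar>)^2) \<le> (R - real N * s)^2 + (real CARD('n) - 1) * s^2"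
    by (rule sum_sq_bound[OF s0 abs_ge_zero abs_ge_zero cb conjunct1[OF cb0[OF i0]] ai0 t0 Rdef])
  define q where "q = sqrt (real CARD('n))"
  have q1: "q > 1" unfolding q_def using n2 by simp
  have qq: "q^2 = real CARD('n)" unfolding q_def by simp
  have "s = \<epsilon> / (2 * q)" unfolding s_def cube_side_def q_def by (rule refl)
  then have eps: "\<epsilon> = 2 * q * s" using q1 by simp
  have Nb: "real N * s \<ge> 2 * q * s + (q - 1) * s"
  proof -
    have "real N \<ge> 3 * q - 1" unfolding N_def q_def by (rule frak_N_bound)
    then have "real N * s \<ge> (3 * q - 1) * s" using s0 by (intro mult_right_mono) auto
    then show ?thesis by (simp add: algebra_simps)
  qed
  have Ri0: "R \<ge> \<bar>p $ i0 - y $ i0\<bar>"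
  proof -
    have "(\<bar>p $ i0 - y $ i0\<bar>)^2 \<le> (\<Sum>i\<in>UNIV. (\<bar>p $ i - y $ i\<bar>)^2)" by (rule member_le_sum) auto
    then show ?thesis unfolding Rdef by (metis real_le_rsqrt)
  qed
  have fi: "(R - real N * s)^2 + (q^2 - 1) * s^2 < (R - 2 * q * s)^2"
    by (rule final_ineq[OF q1 s0 Nb]) (use Ri0 ai0 in linarith)
  have qs: "q * s > 0" using q1 s0 by simp
  have "(q - 1) * s = q * s - s" by (simp add: algebra_simps)
  then have Rpos: "R - \<epsilon> > 0" using Ri0 ai0 Nb eps qs by linarith
  have "(dist p c)^2 = (\<Sum>i\<in>UNIV. (\<bar>p $ i - c $ i\<bar>)^2)"
    unfolding dist_vec_sq[of p c] by (rule real_sqrt_pow2) (simp add: sum_nonneg)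
  also have "\<dots> < (R - \<epsilon>)^2"
  proof -
    have "(real CARD('n) - 1) * s^2 = (q^2 - 1) * s^2" using qq by simp
    moreover have "(R - \<epsilon>)^2 = (R - 2 * q * s)^2" using eps by simp
    ultimately show ?thesis using sq fi by linarith
  qed
  finally have "(dist p c)^2 < (R - \<epsilon>)^2" .
  then have dpc: "dist p c < R - \<epsilon>" using Rpos power_less_imp_less_base[of "dist p c" 2 "R - \<epsilon>"] by simp
  have "{y' \<in> Y. dist c y' \<le> \<epsilon>} \<subseteq> insert p {y' \<in> Y - {p}. dist p y' < r}"
  proof
    fix z assume "z \<in> {y' \<in> Y. dist c y' \<le> \<epsilon>}"
    then have "z \<in> Y" "dist c z \<le> \<epsilon>" by auto
    moreover have "dist p z \<le> dist p c + dist c z" by (rule dist_triangle)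
    ultimately show "z \<in> insert p {y' \<in> Y - {p}. dist p y' < r}" using dpc dr R_def by auto
  qed
  then have "card {y' \<in> Y. dist c y' \<le> \<epsilon>} \<le> card (insert p {y' \<in> Y - {p}. dist p y' < r})"
    using finY by (intro card_mono) auto
  also have "\<dots> \<le> Suc (card {y' \<in> Y - {p}. dist p y' < r})" by (rule card_insert_le_m1) auto
  finally have "card {y' \<in> Y. dist c y' \<le> \<epsilon>} \<le> k" using cnt by linarith
  moreover have "c \<in> core_points k \<epsilon> Y" using cC Ccore by auto
  ultimately show False unfolding core_points_def by auto
qed


lemma core_case:
  fixes X Y C0 :: "(real ^ 'n::finite) set" and p y :: "real ^ 'n"
  assumes e: "\<epsilon> > 0" and C0: "C0 \<in> dbscan_clusters k \<epsilon> Y" and pC0: "p \<in> C0"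
    and pn: "p \<in> nbhd \<epsilon> (frak_n CARD('n)) (boundary_set X \<epsilon> C0)"
    and yY: "y \<in> Y" and yp: "y \<noteq> p" and d: "dist p y \<le> \<epsilon>"
  shows "y \<in> F_set X k \<epsilon> Y"
proof (cases "y \<in> core_points k \<epsilon> Y")
  case False
  then show ?thesis using yY unfolding F_set_def noise_points_def by auto
next
  case True
  have yC0: "y \<in> C0" using cluster_edge[OF C0 pC0 True] yp d by auto
  let ?s = "cube_side \<epsilon> CARD('n)"
  have s0: "?s > 0" using cube_side_pos[OF e] .
  from pn obtain S where S: "S \<in> meet_cubes \<epsilon> (boundary_set X \<epsilon> C0)" "p \<in> thicken \<epsilon> (frak_n CARD('n)) S"
    unfolding nbhd_def by blast
  then obtain s' where s': "s' \<in> S" "\<forall>i. \<bar>p $ i - s' $ i\<bar> \<le> real (frak_n CARD('n)) * ?s"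
    unfolding thicken_def by blast
  have em: "\<epsilon> \<le> real (frak_m CARD('n)) * ?s"
  proof -
    have "real (frak_m CARD('n)) \<ge> 2 * sqrt (real CARD('n))" unfolding frak_m_def by (rule real_nat_ceiling_ge)
    then have "real (frak_m CARD('n)) * ?s \<ge> 2 * sqrt (real CARD('n)) * ?s" using s0 by (intro mult_right_mono) auto
    moreover have "2 * sqrt (real CARD('n)) * ?s = \<epsilon>" unfolding cube_side_def by simp
    ultimately show ?thesis by simp
  qed
  have "\<bar>y $ i - s' $ i\<bar> \<le> real (frak_N CARD('n)) * ?s" for i
  proof -
    have "\<bar>y $ i - p $ i\<bar> \<le> dist y p" using dist_vec_nth_le[of y i p] by (simp add: dist_real_def)
    then have "\<bar>y $ i - p $ i\<bar> \<le> \<epsilon>" using d by (simp add: dist_commute)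
    moreover have "real (frak_N CARD('n)) * ?s = real (frak_n CARD('n)) * ?s + real (frak_m CARD('n)) * ?s"
      unfolding frak_N_def by (simp add: distrib_right)
    ultimately show ?thesis using s'(2)[rule_format, of i] em by linarith
  qed
  then have "y \<in> thicken \<epsilon> (frak_N CARD('n)) S" unfolding thicken_def using s'(1) by blast
  then have "y \<in> nbhd \<epsilon> (frak_N CARD('n)) (boundary_set X \<epsilon> C0)" unfolding nbhd_def using S(1) by blast
  then show ?thesis using yC0 C0 unfolding F_set_def by blast
qed

lemma F_sub_Y: "F_set X k \<epsilon> Y \<subseteq> Y"
  unfolding F_set_def noise_points_def using clusters_core core_points_def by fastforce

lemma J_sub_Y: "J_set X k \<epsilon> Y \<subseteq> Y"
  unfolding J_set_def noise_points_def using clusters_core core_points_def by fastforce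

lemma core_eq_J:
  fixes X Y :: "(real ^ 'n::finite) set" and z :: "real ^ 'n"
  assumes n2: "CARD('n) \<ge> 2" and finX: "finite X" and YX: "Y \<subseteq> X" and e: "\<epsilon> > 0"
    and zJ: "z \<in> J_set X k \<epsilon> Y" and k1: "1 \<le> k"
  shows "core_dist k (F_set X k \<epsilon> Y) z = core_dist k Y z"
proof -
  have finY: "finite Y" using finX YX finite_subset by blast
  have zY: "z \<in> Y" using zJ J_sub_Y by blast
  show ?thesis
  proof (rule core_dist_eqI[OF finY F_sub_Y])
    fix r0 y assume r0: "core_dist k Y z = ereal r0" and yY: "y \<in> Y - {z}" and dy: "dist z y \<le> r0"
    show "y \<in> F_set X k \<epsilon> Y"
    proof (cases "y \<in> core_points k \<epsilon> Y")
      case False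
      then show ?thesis using yY unfolding F_set_def noise_points_def by auto
    next
      case ycore: True
      from zJ consider (cl) C0 where "C0 \<in> dbscan_clusters k \<epsilon> Y" "z \<in> nbhd \<epsilon> (frak_n CARD('n)) (boundary_set X \<epsilon> C0)" "z \<in> C0"
        | (no) "z \<in> noise_points k \<epsilon> Y"
        unfolding J_set_def by blast
      then show ?thesis
      proof cases
        case cl
        have zc: "z \<in> core_points k \<epsilon> Y" using clusters_core[OF cl(1)] cl(3) by blast
        then have ck: "card {y' \<in> Y. dist z y' \<le> \<epsilon>} > k" unfolding core_points_def by simp
        have "{y' \<in> Y. dist z y' \<le> \<epsilon>} = insert z {y' \<in> Y - {z}. dist z y' \<le> \<epsilon>}" using zY e by auto
        then have "card {y' \<in> Y. dist z y' \<le> \<epsilon>} = Suc (card {y' \<in> Y - {z}. dist z y' \<le> \<epsilon>})"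
          using finY by simp
        then have "k \<le> card {y' \<in> Y - {z}. dist z y' \<le> \<epsilon>}" using ck by simp
        then have "core_dist k Y z \<le> ereal \<epsilon>" using core_dist_le_iff[OF finY k1] by blast
        then have "r0 \<le> \<epsilon>" using r0 by simp
        then show ?thesis using core_case[OF e cl(1) cl(3) cl(2)] yY dy by auto
      next
        case no
        define C where "C = {q. (y, q) \<in> (eps_edges k \<epsilon> Y)\<^sup>*}"
        have C: "C \<in> dbscan_clusters k \<epsilon> Y" "y \<in> C" using own_cluster[OF ycore] unfolding C_def by auto
        have Ccore: "C \<subseteq> core_points k \<epsilon> Y" using clusters_core[OF C(1)] .
        have zC: "z \<notin> C" using no Ccore unfolding noise_points_def by auto
        have cnt: "card {y' \<in> Y - {z}. dist z y' < r0} < k" using core_dist_less_card[OF finY k1 r0] .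
        have "y \<in> nbhd \<epsilon> (frak_N CARD('n)) (boundary_set X \<epsilon> C)"
          using noise_case[OF n2 YX e zY zC Ccore C(2) finY cnt dy] .
        then show ?thesis using C unfolding F_set_def by blast
      qed
    qed
  qed
qed

theorem lemma5p4:
  fixes X Y :: "(real ^ 'n::finite) set" and k :: nat and \<epsilon> :: real and p q :: "real ^ 'n"
  assumes "CARD('n) \<ge> 2"
    and "finite X"
    and "Y \<subseteq> X"
    and "\<epsilon> > 0"
    and "p \<in> J_set X k \<epsilon> Y"
    and "q \<in> J_set X k \<epsilon> Y"
  shows "reach k (F_set X k \<epsilon> Y) p q = reach k Y p q"
proof (cases "k = 0")
  case True
  then show ?thesis by (simp add: reach_def core_dist_def)
next
  case False
  then have k1: "1 \<le> k" by simp
  have "core_dist k (F_set X k \<epsilon> Y) p = core_dist k Y p" using core_eq_J[OF assms(1-4,5) k1] .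
  moreover have "core_dist k (F_set X k \<epsilon> Y) q = core_dist k Y q" using core_eq_J[OF assms(1-4,6) k1] .
  ultimately show ?thesis by (simp add: reach_def)
qed

end
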